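(* For every $n\ge1$, $M_n$ is not a finitely generated $M_0$-module. Moreover, letting $B=K[x,y/x]_{(x,y/x)}$ (a regular local ring birationally dominating $A$) and $M_\infty=\bar\nu(B\setminus\{0\})$, the set $M_\infty$ is not a finitely generated $M_0$-module.
   Context: $K$ is an algebraically closed field, $A=K[x,y]_{(x,y)}$. Set $\bar\beta_0=1$, $\bar\beta_{i+1}=2\bar\beta_i+2^{-(i+1)}$. Let $P_0=x$, $P_1=y$, $P_{i+1}=P_i^2-P_0^{2^{i+1}}P_{i-1}$ ($i\ge1$). Let $\bar\nu$ be the valuation of $K(x,y)$ dominating $A$ for which $P_0,P_1,\dots$ is a (minimal) generating sequence with $\bar\nu(P_i)=\bar\beta_i$; its value group is $\bigcup_{i\ge0}2^{-i}\mathbb Z$ and $M_0=\bar\nu(A\setminus\{0\})=\sum_{i\ge0}\mathbb N\bar\beta_i$. Let $z=y/x$, $W_n=\{a_0+a_1z+\cdots+a_nz^n\mid a_j\in K[x,y]\}$ and $M_n=\{\bar\nu(f)\mid 0\ne f\in W_n\}$. A subset $F$ with $M_0+F\subseteq F$ is a finitely generated $M_0$-module if $F=\bigcup_{i=1}^k(M_0+m_i)$ for some $m_1,\dots,m_k\in F$. *)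

theory Defs
  imports "HOL-Computational_Algebra.Polynomial" "HOL-Computational_Algebra.Fraction_Field"
begin

text \<open>K[x,y] is modelled as the type 'a poly poly: the inner variable is x,
  the outer variable is y.  K(x,y) is the fraction field 'a poly poly fract.\<close>

definition varX :: "'a::field poly poly" where
  "varX = [:[:0, 1:]:]"

definition varY :: "'a::field poly poly" where
  "varY = [:0, 1:]"

definition emb :: "'a::field poly poly \<Rightarrow> 'a poly poly fract" where
  "emb f = Fract f 1"

definition at_origin :: "'a::field poly poly \<Rightarrow> 'a" where
  "at_origin f = coeff (coeff f 0) 0"

definition ringA :: "'a::field poly poly fract set" where
  "ringA = {emb f / emb g | f g. at_origin g \<noteq> 0}"

definition maxA :: "'a::field poly poly fract set" where
  "maxA = {emb f / emb g | f g. at_origin f = 0 \<and> at_origin g \<noteq> 0}"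

fun betabar :: "nat \<Rightarrow> rat" where
  "betabar 0 = 1"
| "betabar (Suc i) = 2 * betabar i + 1 / 2 ^ (Suc i)"

fun Pseq :: "nat \<Rightarrow> 'a::field poly poly" where
  "Pseq 0 = varX"
| "Pseq (Suc 0) = varY"
| "Pseq (Suc (Suc i)) = (Pseq (Suc i))^2 - varX ^ (2 ^ (Suc (Suc i))) * Pseq i"

definition is_valuation :: "('a::field poly poly fract \<Rightarrow> rat) \<Rightarrow> bool" where
  "is_valuation v \<longleftrightarrow>
     (\<forall>a b. a \<noteq> 0 \<longrightarrow> b \<noteq> 0 \<longrightarrow> v (a * b) = v a + v b) \<and>
     (\<forall>a b. a \<noteq> 0 \<longrightarrow> b \<noteq> 0 \<longrightarrow> a + b \<noteq> 0 \<longrightarrow> v (a + b) \<ge> min (v a) (v b))"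

definition dominates_A :: "('a::field poly poly fract \<Rightarrow> rat) \<Rightarrow> bool" where
  "dominates_A v \<longleftrightarrow> (\<forall>a\<in>ringA - {0}. v a \<ge> 0) \<and> (\<forall>a\<in>maxA - {0}. v a > 0)"

definition zF :: "'a::field poly poly fract" where
  "zF = emb varY / emb varX"

definition Wn :: "nat \<Rightarrow> 'a::field poly poly fract set" where
  "Wn n = {(\<Sum>j\<le>n. emb (a j) * zF ^ j) | a. True}"

text \<open>evaluation of a polynomial G(x,z) (outer variable z, inner variable x) at z = y/x\<close>
definition evalXZ :: "'a::field poly poly \<Rightarrow> 'a poly poly fract" where
  "evalXZ G = poly (map_poly (\<lambda>c. emb [:c:]) G) zF"

definition ringB :: "'a::field poly poly fract set" where
  "ringB = {evalXZ G / evalXZ H | G H. at_origin H \<noteq> 0}"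

definition M0 :: "('a::field poly poly fract \<Rightarrow> rat) \<Rightarrow> rat set" where
  "M0 v = v ` (ringA - {0})"

definition Mn :: "('a::field poly poly fract \<Rightarrow> rat) \<Rightarrow> nat \<Rightarrow> rat set" where
  "Mn v n = v ` (Wn n - {0})"

definition Minf :: "('a::field poly poly fract \<Rightarrow> rat) \<Rightarrow> rat set" where
  "Minf v = v ` (ringB - {0})"

definition fg_module :: "rat set \<Rightarrow> rat set \<Rightarrow> bool" where
  "fg_module M F \<longleftrightarrow> (\<forall>a\<in>M. \<forall>b\<in>F. a + b \<in> F) \<and>
     (\<exists>S. finite S \<and> S \<noteq> {} \<and> S \<subseteq> F \<and> F = (\<Union>m\<in>S. (\<lambda>a. a + m) ` M))"

end

theory Submission imports Defs begin

lemma emb_add: "emb (f + g) = emb f + emb g" by (simp add: emb_def)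
lemma emb_mult: "emb (f * g) = emb f * emb g" by (simp add: emb_def)
lemma emb_diff: "emb (f - g) = emb f - emb g" by (simp add: emb_def)
lemma emb_0[simp]: "emb 0 = 0" by (simp add: emb_def Zero_fract_def)
lemma emb_1[simp]: "emb 1 = 1" by (simp add: emb_def One_fract_def)
lemma emb_eq0[simp]: "emb f = 0 \<longleftrightarrow> f = 0" by (simp add: emb_def Zero_fract_def eq_fract)
lemma emb_pow: "emb (f ^ n) = emb f ^ n" by (induct n) (auto simp: emb_mult)

definition Dset :: "nat \<Rightarrow> rat set" where "Dset i = {q. \<exists>k::int. q * 2^i = of_int k}"

lemma Dset_mono: "i \<le> j \<Longrightarrow> q \<in> Dset i \<Longrightarrow> q \<in> Dset j"
proof -
  assume "i \<le> j" "q \<in> Dset i"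
  then obtain k::int where k: "q * 2^i = of_int k" by (auto simp: Dset_def)
  have "q * 2^j = q * 2^i * 2^(j-i)" using \<open>i\<le>j\<close> by (simp add: power_add[symmetric])
  also have "\<dots> = of_int (k * 2^(j-i))" using k by simp
  finally show ?thesis by (auto simp: Dset_def intro!: exI[of _ "k * 2^(j-i)"])
qed

lemma Dset_add: "a \<in> Dset i \<Longrightarrow> b \<in> Dset i \<Longrightarrow> a + b \<in> Dset i"
  by (auto simp: Dset_def distrib_right) (metis of_int_add)
lemma Dset_diff: "a \<in> Dset i \<Longrightarrow> b \<in> Dset i \<Longrightarrow> a - b \<in> Dset i"
  by (auto simp: Dset_def left_diff_distrib) (metis of_int_diff)
lemma Dset_int: "of_int k \<in> Dset i"
  by (auto simp: Dset_def) (metis of_int_mult of_int_numeral of_int_power)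
lemma Dset_nat: "of_nat k \<in> Dset i"
  using Dset_int[of "int k" i] by simp

lemma betabar_int: "\<exists>k::int. betabar i * 2^i = of_int k \<and> (i > 0 \<longrightarrow> odd k)"
proof (induct i)
  case 0 then show ?case by auto
next
  case (Suc i)
  then obtain k::int where k: "betabar i * 2^i = of_int k" by auto
  have "betabar (Suc i) * 2^(Suc i) = 4 * (betabar i * 2^i) + 1"
    by (simp add: field_simps)
  then have "betabar (Suc i) * 2^(Suc i) = of_int (4*k+1)" using k by simp
  then show ?case by (intro exI[of _ "4*k+1"]) auto
qed

lemma betabar_D: "betabar i \<in> Dset i"
  using betabar_int[of i] by (auto simp: Dset_def)

lemma betabar_notD: "betabar (Suc i) \<notin> Dset i"
proof
  assume "betabar (Suc i) \<in> Dset i"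
  then obtain m::int where m: "betabar (Suc i) * 2^i = of_int m" by (auto simp: Dset_def)
  obtain k::int where k: "betabar (Suc i) * 2^(Suc i) = of_int k" "odd k" using betabar_int[of "Suc i"] by auto
  have "of_int k = (of_int (2*m) :: rat)" using m k(1) by simp
  then have "k = 2*m" by linarith
  with k(2) show False by simp
qed

lemma betabar_pos: "betabar i \<ge> 1"
proof (induct i)
  case 0 then show ?case by simp
next
  case (Suc i)
  have "(0::rat) \<le> 1 / 2^(Suc i)" by simp
  then show ?case using Suc by (simp only: betabar.simps)
qed

lemma betabar_mono: "i \<le> j \<Longrightarrow> betabar i \<le> betabar j"
proof (induct j)
  case 0 then show ?case by simp
next
  case (Suc j)
  have "betabar j \<le> betabar (Suc j)" using betabar_pos[of j] by simp
  with Suc show ?case by (cases "i = Suc j") auto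
qed

lemma Pseq_props: "lead_coeff (Pseq (Suc i) :: 'a::field poly poly) = 1 \<and> degree (Pseq (Suc i) :: 'a poly poly) = 2^i"
proof (induct i rule: nat_less_induct)
  case (1 i)
  show ?case
  proof (cases i)
    case 0 then show ?thesis by (simp add: varY_def)
  next
    case (Suc j)
    then have IH: "lead_coeff (Pseq (Suc j) :: 'a poly poly) = 1 \<and> degree (Pseq (Suc j) :: 'a poly poly) = 2^j"
      using 1 by auto
    have d0: "degree (varX ^ (2 ^ Suc (Suc j)) * Pseq j :: 'a poly poly) < 2^(Suc j)"
    proof (cases j)
      case 0 then show ?thesis using degree_power_le[of "[:[:0, 1:]:] :: 'a poly poly" 4] by (simp add: varX_def)
    next
      case (Suc l)
      have "degree (varX ^ (2 ^ Suc (Suc j)) * Pseq j :: 'a poly poly) \<le> degree (varX ^ (2 ^ Suc (Suc j)) :: 'a poly poly) + degree (Pseq j :: 'a poly poly)"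
        by (rule degree_mult_le)
      also have "\<dots> = 2^l" using 1 Suc \<open>i = Suc j\<close> by (simp add: varX_def degree_power_eq)
      moreover have "(2::nat)^l < 2^Suc j" using Suc by simp
      ultimately show ?thesis by linarith
    qed
    have d1: "degree ((Pseq (Suc j))^2 :: 'a poly poly) = 2^Suc j" "lead_coeff ((Pseq (Suc j))^2 :: 'a poly poly) = 1"
    proof -
      have nz: "Pseq (Suc j) \<noteq> (0:: 'a poly poly)" using IH by auto
      show "degree ((Pseq (Suc j))^2 :: 'a poly poly) = 2^Suc j" using IH nz by (simp add: degree_power_eq)
      show "lead_coeff ((Pseq (Suc j))^2 :: 'a poly poly) = 1" using IH by (metis lead_coeff_power power_one)
    qed
    have e: "(Pseq (Suc (Suc j)) :: 'a poly poly) = - (varX ^ (2 ^ Suc (Suc j)) * Pseq j) + (Pseq (Suc j))^2"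
      by simp
    have d0': "degree (- (varX ^ (2 ^ Suc (Suc j)) * Pseq j) :: 'a poly poly) < degree ((Pseq (Suc j))^2 :: 'a poly poly)"
      using d0 d1 by simp
    show ?thesis unfolding Suc e using lead_coeff_add_le[OF d0'] degree_add_eq_right[OF d0'] d1 by simp
  qed
qed

lemma varX_nz[simp]: "(varX :: 'a::field poly poly) \<noteq> 0" by (simp add: varX_def)
lemma varY_nz[simp]: "(varY :: 'a::field poly poly) \<noteq> 0" by (simp add: varY_def)

lemma Pseq_nz: "(Pseq i :: 'a::field poly poly) \<noteq> 0"
proof (cases i)
  case 0 then show ?thesis by simp
next
  case (Suc j) then show ?thesis using Pseq_props[of j, where 'a='a] by auto
qed

lemma Pseq_ideal: "\<exists>A B. (Pseq i :: 'a::field poly poly) = varX * A + varY * B"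
proof (induct i rule: nat_less_induct)
  case (1 i)
  show ?case
  proof (cases i)
    case 0 then show ?thesis by (intro exI[of _ 1] exI[of _ 0]) simp
  next
    case (Suc j)
    show ?thesis
    proof (cases j)
      case 0 then show ?thesis using Suc by (intro exI[of _ 0] exI[of _ 1]) simp
    next
      case (Suc l)
      obtain A B where AB: "(Pseq (Suc l) :: 'a poly poly) = varX * A + varY * B" using 1 Suc \<open>i = Suc j\<close> by blast
      have e: "(Pseq i :: 'a poly poly) = varX * (Pseq (Suc l) * A - varX ^ (2 ^ Suc (Suc l) - 1) * Pseq l) + varY * (Pseq (Suc l) * B)"
      proof -
        have "varX * varX ^ (2 ^ Suc (Suc l) - 1) = (varX ^ (2 ^ Suc (Suc l)) :: 'a poly poly)"
          by (simp add: power_Suc[symmetric] del: power_Suc)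
        then show ?thesis using Suc \<open>i = Suc j\<close>
          by (simp add: power2_eq_square algebra_simps) (subst (2) AB, simp add: algebra_simps)
      qed
      then show ?thesis by blast
    qed
  qed
qed

declare betabar.simps(2)[simp del]

definition Good :: "rat \<Rightarrow> bool" where
  "Good x \<longleftrightarrow> (\<exists>j. x \<in> Dset j) \<and> (\<forall>i. x \<notin> Dset i \<longrightarrow> x \<ge> betabar (Suc i))"

definition good :: "nat \<Rightarrow> rat \<Rightarrow> bool" where
  "good j x \<longleftrightarrow> x \<in> Dset j \<and> (\<forall>i. x \<notin> Dset i \<longrightarrow> x \<ge> betabar (Suc i))"

lemma good_Suc: "good j x \<Longrightarrow> good (Suc j) x"
  using Dset_mono[of j "Suc j" x] by (auto simp: good_def)

lemma good_new: assumes "b \<in> Dset j" "b \<ge> 0" shows "good (Suc j) (b + betabar (Suc j))"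
  unfolding good_def
proof (intro conjI allI impI)
  show "b + betabar (Suc j) \<in> Dset (Suc j)" using assms betabar_D Dset_mono[of j "Suc j"] by (auto intro: Dset_add)
  fix i assume i: "b + betabar (Suc j) \<notin> Dset i"
  have "i \<le> j"
  proof (rule ccontr)
    assume "\<not> i \<le> j"
    then have "Suc j \<le> i" by simp
    with \<open>b + betabar (Suc j) \<in> Dset (Suc j)\<close> i show False using Dset_mono by blast
  qed
  then show "betabar (Suc i) \<le> b + betabar (Suc j)" using betabar_mono[of "Suc i" "Suc j"] assms by simp
qed

lemma good_new_notD: assumes "b \<in> Dset j" shows "b + betabar (Suc j) \<notin> Dset j"
proof
  assume "b + betabar (Suc j) \<in> Dset j"
  then have "b + betabar (Suc j) - b \<in> Dset j" using assms Dset_diff by blast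
  then show False using betabar_notD by simp
qed

locale vctx =
  fixes v :: "'a::field poly poly fract \<Rightarrow> rat"
  assumes val: "is_valuation v" and dom: "dominates_A v" and vP: "\<And>i. v (emb (Pseq i)) = betabar i"
begin

lemma vmult: "a \<noteq> 0 \<Longrightarrow> b \<noteq> 0 \<Longrightarrow> v (a * b) = v a + v b"
  using val by (auto simp: is_valuation_def)
lemma vadd: "a \<noteq> 0 \<Longrightarrow> b \<noteq> 0 \<Longrightarrow> a + b \<noteq> 0 \<Longrightarrow> v (a + b) \<ge> min (v a) (v b)"
  using val by (auto simp: is_valuation_def)
lemma v1: "v 1 = 0" using vmult[of 1 1] by simp
lemma vdiv: "a \<noteq> 0 \<Longrightarrow> b \<noteq> 0 \<Longrightarrow> v (a / b) = v a - v b"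
  using vmult[of "a/b" b] by simp
lemma vneg: "v (- a) = v a"
proof (cases "a = 0")
  case True then show ?thesis by simp
next
  case False
  have "v ((-1) * (-1)) = v (-1) + v (-1)" by (rule vmult) auto
  then have m: "v (-1) = 0" using v1 by simp
  have "v ((-1) * a) = v (-1) + v a" using False by (intro vmult) auto
  then show ?thesis using m by simp
qed
lemma vstrict: assumes "a \<noteq> 0" "b \<noteq> 0" "v a < v b" shows "v (a + b) = v a"
proof -
  have ab: "a + b \<noteq> 0"
  proof
    assume "a + b = 0" then have "b = - a" by (simp add: eq_neg_iff_add_eq_0 add.commute)
    then show False using assms vneg by simp
  qed
  have "v (a + b) \<ge> v a" using vadd[OF assms(1,2) ab] assms by simp
  moreover have "v ((a + b) + (- b)) \<ge> min (v (a+b)) (v (-b))" using assms by (intro vadd[OF ab]) auto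
  then have "v a \<ge> min (v (a+b)) (v b)" using vneg by simp
  then have "v a \<ge> v (a + b)" using assms by (simp add: min_def split: if_splits)
  ultimately show ?thesis by simp
qed

lemma v_emb_nonneg: "f \<noteq> 0 \<Longrightarrow> v (emb f) \<ge> 0"
proof -
  assume f: "f \<noteq> 0"
  have "emb f \<in> ringA" unfolding ringA_def by (rule CollectI, rule exI[of _ f], rule exI[of _ 1]) (simp add: at_origin_def)
  then show ?thesis using dom f by (auto simp: dominates_A_def)
qed

lemma v_emb_unit: assumes "at_origin g \<noteq> 0" shows "v (emb g) = 0"
proof -
  have g: "g \<noteq> 0" using assms by (auto simp: at_origin_def)
  have "1 / emb g \<in> ringA" unfolding ringA_def by (rule CollectI, rule exI[of _ 1], rule exI[of _ g]) (simp add: assms)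
  then have "v (1 / emb g) \<ge> 0" using dom g by (auto simp: dominates_A_def)
  then show ?thesis using vdiv[of 1 "emb g"] v1 v_emb_nonneg[OF g] g by simp
qed

lemma vX: "v (emb varX) = 1" using vP[of 0] by simp
lemma vY: "v (emb varY) = 5/2" using vP[of 1] by (simp add: betabar.simps)
lemma zF_nz: "zF \<noteq> 0" by (simp add: zF_def)
lemma vz: "v zF = 3/2" unfolding zF_def using vdiv[of "emb varY" "emb varX"] vX vY by simp

lemma vpow: "a \<noteq> 0 \<Longrightarrow> v (a ^ n) = of_nat n * v a"
  by (induct n) (auto simp: vmult v1 algebra_simps)

lemma base_val: assumes "c \<noteq> 0" shows "v (emb [:c:]) = of_nat (order 0 c)"
proof -
  obtain q where q: "c = [:- 0, 1:] ^ order 0 c * q" "\<not> [:- 0, 1:] dvd q"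
    using order_decomp[OF assms] by blast
  have q0: "poly q 0 \<noteq> 0" using q(2) dvd_iff_poly_eq_0[of 0 q] by simp
  have qnz: "q \<noteq> 0" using q0 by auto
  have cpow0: "\<And>n (d::'a poly). [:d:]^n = [:d^n:]"
    by (induct_tac n) auto
  have cpow: "\<And>n. [:[:0,1:]^n:] = ([:[:0,1:]:] ^ n :: 'a poly poly)"
    using cpow0 by metis
  have e: "[:c:] = varX ^ order 0 c * [:q:]"
    using q(1) by (simp add: varX_def cpow[symmetric] mult.commute)
  have u: "v (emb [:q:]) = 0" using q0 by (intro v_emb_unit) (simp add: at_origin_def poly_0_coeff_0)
  show ?thesis unfolding e emb_mult emb_pow using vmult[of "emb varX ^ order 0 c" "emb [:q:]"] qnz u vpow vX
    by simp
qed

lemma key: "f \<noteq> 0 \<Longrightarrow> degree f < 2^j \<Longrightarrow> good j (v (emb f))"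
proof (induct j arbitrary: f)
  case 0
  then have "degree f = 0" by simp
  then obtain c where c: "f = [:c:]" by (metis degree0_coeffs)
  then have "c \<noteq> 0" using 0 by simp
  then have "v (emb f) = of_nat (order 0 c)" using c base_val by simp
  then have "v (emb f) \<in> Dset 0" using Dset_nat by simp
  then show ?case unfolding good_def using Dset_mono[of 0] by blast
next
  case (Suc j)
  show ?case
  proof (cases "degree f < 2^j")
    case True then show ?thesis using Suc good_Suc by blast
  next
    case False
    define P where "P = (Pseq (Suc j) :: 'a poly poly)"
    have Pm: "lead_coeff P = 1" "degree P = 2^j" using Pseq_props[of j] by (auto simp: P_def)
    have Pnz: "P \<noteq> 0" using Pm by auto
    obtain q r where qr: "pseudo_divmod f P = (q, r)" by (metis surj_pair)
    have f: "f = P * q + r" using pseudo_divmod(1)[OF Pnz qr] Pm by simp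
    have r: "r = 0 \<or> degree r < 2^j" using pseudo_divmod(2)[OF Pnz qr] Pm by simp
    have qnz: "q \<noteq> 0" using f r False by auto
    have dPq: "degree (P * q) = 2^j + degree q" using Pnz qnz Pm by (simp add: degree_mult_eq)
    have "degree f = degree (P * q)"
    proof (cases "r = 0")
      case True then show ?thesis using f by simp
    next
      case False then show ?thesis using f r dPq by (simp add: degree_add_eq_left)
    qed
    then have dq: "degree q < 2^j" using Suc.prems dPq by simp
    have gq: "good j (v (emb q))" using Suc.hyps[OF qnz dq] .
    have vq0: "v (emb q) \<ge> 0" using v_emb_nonneg[OF qnz] .
    define a where "a = v (emb q) + betabar (Suc j)"
    have va: "v (emb (P * q)) = a" unfolding a_def emb_mult P_def
      using vmult[of "emb (Pseq (Suc j))" "emb q"] qnz Pseq_nz[of "Suc j"] vP by (simp add: add.commute)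
    have ga: "good (Suc j) a" unfolding a_def using good_new gq vq0 by (auto simp: good_def)
    have anD: "a \<notin> Dset j" unfolding a_def using good_new_notD gq by (auto simp: good_def)
    show ?thesis
    proof (cases "r = 0")
      case True then show ?thesis using f va ga by simp
    next
      case False
      have dr: "degree r < 2^j" using r False by simp
      have gr: "good j (v (emb r))" using Suc.hyps[OF False dr] .
      have ne: "v (emb r) \<noteq> a" using gr anD by (auto simp: good_def)
      have Pqnz: "P * q \<noteq> 0" using Pnz qnz by simp
      show ?thesis
      proof (cases "a < v (emb r)")
        case True
        have "v (emb (P*q) + emb r) = a" using vstrict[of "emb (P*q)" "emb r"] True va Pqnz False by simp
        then show ?thesis using f ga by (simp add: emb_add)
      next
        case c: False
        then have lt: "v (emb r) < a" using ne by simp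
        have "v (emb r + emb (P*q)) = v (emb r)" using vstrict[of "emb r" "emb (P*q)"] lt va Pqnz False by simp
        then show ?thesis using f good_Suc[OF gr] by (simp add: emb_add add.commute)
      qed
    qed
  qed
qed

lemma key2: "f \<noteq> 0 \<Longrightarrow> Good (v (emb f))"
proof -
  assume "f \<noteq> 0"
  have "degree f < 2 ^ degree f" by (rule less_exp)
  from key[OF \<open>f \<noteq> 0\<close> this] show ?thesis by (auto simp: good_def Good_def)
qed

lemma M0_Good: "x \<in> M0 v \<Longrightarrow> Good x"
proof -
  assume "x \<in> M0 v"
  then obtain y where y: "y \<in> ringA" "y \<noteq> 0" "x = v y" by (auto simp: M0_def)
  then obtain f g where fg0: "y = emb f / emb g" "at_origin g \<noteq> 0" by (auto simp: ringA_def)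
  have fg: "x = v (emb f / emb g)" "at_origin g \<noteq> 0" "emb f / emb g \<noteq> 0" using y fg0 by auto
  have g: "g \<noteq> 0" using fg(2) by (auto simp: at_origin_def)
  have f: "f \<noteq> 0" using fg(3) by auto
  have "x = v (emb f)" using fg vdiv[of "emb f" "emb g"] v_emb_unit[OF fg(2)] f g by simp
  then show ?thesis using key2[OF f] by simp
qed

end

lemma evalXZ_0[simp]: "evalXZ 0 = 0" by (simp add: evalXZ_def)
lemma evalXZ_pCons: "evalXZ (pCons c G) = emb [:c:] + zF * evalXZ G"
  by (simp add: evalXZ_def map_poly_pCons)
lemma evalXZ_1: "evalXZ 1 = 1"
  by (simp add: evalXZ_def map_poly_1 one_pCons[symmetric])

lemma emb_cadd: "emb [:a + b:] = emb [:a:] + emb [:b:]" by (simp add: emb_add[symmetric])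
lemma emb_cmult: "emb [:a * b:] = emb [:a:] * emb [:b:]" by (simp add: emb_mult[symmetric] mult.commute)

lemma evalXZ_add: "evalXZ (G + H) = evalXZ G + evalXZ H"
proof -
  have "map_poly (\<lambda>c. emb [:c:]) (G + H) = map_poly (\<lambda>c. emb [:c:]) G + map_poly (\<lambda>c. emb [:c:]) H"
    by (intro poly_eqI) (simp add: coeff_map_poly emb_cadd)
  then show ?thesis by (simp add: evalXZ_def)
qed

lemma evalXZ_smult: "evalXZ (smult c G) = emb [:c:] * evalXZ G"
  by (induct G) (auto simp: evalXZ_pCons emb_cmult algebra_simps)

lemma evalXZ_shift: "zF * evalXZ G = evalXZ (pCons 0 G)"
  by (simp add: evalXZ_pCons)

lemma embY: "emb varY = emb varX * zF" by (simp add: zF_def)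

lemma emb_R: "\<exists>G. emb a = evalXZ G"
proof (induct a)
  case 0 then show ?case by (intro exI[of _ 0]) simp
next
  case (pCons c p)
  then obtain G where G: "emb p = evalXZ G" by blast
  have e: "pCons c p = [:c:] + varY * p" by (simp add: varY_def)
  have "emb (pCons c p) = emb [:c:] + zF * (emb varX * evalXZ G)"
    unfolding e emb_add emb_mult embY G by (simp add: algebra_simps)
  also have "\<dots> = evalXZ (pCons c (smult [:0,1:] G))"
    by (simp add: evalXZ_pCons evalXZ_smult varX_def)
  finally show ?case by blast
qed

lemma Wn_R: fixes w :: "'a::field poly poly fract" shows "w \<in> Wn n \<Longrightarrow> \<exists>G. w = evalXZ G"
proof -
  assume "w \<in> Wn n"
  then obtain a where a: "w = (\<Sum>j\<le>n. emb (a j) * zF ^ j)" by (auto simp: Wn_def)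
  have t: "\<And>j (b::'a poly poly). \<exists>G. emb b * zF ^ j = evalXZ G"
  proof -
    fix j and b :: "'a poly poly"
    show "\<exists>G. emb b * zF ^ j = evalXZ G"
    proof (induct j)
      case 0 then show ?case using emb_R by simp
    next
      case (Suc j)
      then obtain G where "emb b * zF ^ j = evalXZ G" by blast
      then have "emb b * zF ^ Suc j = evalXZ (pCons 0 G)"
        by (simp flip: evalXZ_shift add: algebra_simps)
      then show ?case by blast
    qed
  qed
  have "\<exists>G. (\<Sum>j\<le>m. emb (a j) * zF ^ j) = evalXZ G" for m
  proof (induct m)
    case 0 then show ?case using t[of "a 0" 0] by simp
  next
    case (Suc m)
    then obtain G where G: "(\<Sum>j\<le>m. emb (a j) * zF ^ j) = evalXZ G" by blast
    obtain H where H: "emb (a (Suc m)) * zF ^ Suc m = evalXZ H" using t by blast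
    show ?case using G H by (intro exI[of _ "G + H"]) (simp add: evalXZ_add)
  qed
  then show ?thesis using a by blast
qed

lemma R_poly: "\<exists>g d. evalXZ G * emb varX ^ d = emb g"
proof (induct G)
  case 0 then show ?case by (intro exI[of _ 0]) simp
next
  case (pCons c G)
  then obtain g d where gd: "evalXZ G * emb varX ^ d = emb g" by blast
  have "evalXZ (pCons c G) * emb varX ^ Suc d = emb [:c:] * emb varX ^ Suc d + (emb varX * zF) * (evalXZ G * emb varX ^ d)"
    by (simp add: evalXZ_pCons algebra_simps)
  also have "\<dots> = emb ([:c:] * varX ^ Suc d + varY * g)"
    unfolding emb_add emb_mult emb_pow embY gd[symmetric] by (simp add: algebra_simps)
  finally show ?case by blast
qed

lemma witness: "\<exists>(A::'a::field poly poly) (B::'a::field poly poly). emb (Pseq i :: 'a::field poly poly) / emb varX = emb A + emb B * zF"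
proof -
  obtain A B :: "'a poly poly" where AB: "(Pseq i :: 'a poly poly) = varX * A + varY * B" using Pseq_ideal by blast
  have "emb (Pseq i :: 'a::field poly poly) / emb varX = emb A + emb B * zF"
    unfolding AB emb_add emb_mult by (simp add: zF_def field_simps)
  then show ?thesis by blast
qed

lemma wit_Wn: assumes "n \<ge> 1" shows "emb (Pseq i :: 'a::field poly poly) / emb varX \<in> Wn n"
proof -
  obtain A B :: "'a::field poly poly" where AB: "emb (Pseq i :: 'a::field poly poly) / emb varX = emb A + emb B * zF" using witness by blast
  define a where "a = (\<lambda>j::nat. if j = 0 then A else if j = 1 then B else 0)"
  have "(\<Sum>j\<le>n. emb (a j) * zF ^ j) = (\<Sum>j\<in>{0,1}. emb (a j) * zF ^ j)"
    by (rule sum.mono_neutral_right) (use assms in \<open>auto simp: a_def\<close>)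
  also have "\<dots> = emb A + emb B * zF" by (simp add: a_def)
  finally show ?thesis unfolding Wn_def using AB by (intro CollectI exI[of _ a]) simp
qed

lemma wit_B: "emb (Pseq i :: 'a::field poly poly) / emb varX \<in> ringB"
proof -
  obtain G where G: "emb (Pseq i :: 'a::field poly poly) / emb varX = evalXZ G" using wit_Wn[of 1 i] Wn_R by blast
  have o: "at_origin (1 :: 'a::field poly poly) \<noteq> 0" by (simp add: at_origin_def)
  have "emb (Pseq i :: 'a::field poly poly) / emb varX = evalXZ G / evalXZ (1 :: 'a poly poly)" using G evalXZ_1[where 'a='a] by simp
  then show ?thesis unfolding ringB_def using o by blast
qed

context vctx begin

definition nn :: "'a poly poly fract \<Rightarrow> bool" where "nn x \<longleftrightarrow> x = 0 \<or> v x \<ge> 0"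

lemma nn_add: "nn x \<Longrightarrow> nn y \<Longrightarrow> nn (x + y)"
  unfolding nn_def using vadd[of x y] by (cases "x = 0"; cases "y = 0"; cases "x + y = 0") auto

lemma R_nonneg: "nn (evalXZ G)"
proof (induct G)
  case 0 then show ?case by (simp add: nn_def)
next
  case (pCons c G)
  have a: "nn (emb [:c:])" using v_emb_nonneg[of "[:c:]"] by (auto simp: nn_def)
  have b: "nn (zF * evalXZ G)"
  proof (cases "evalXZ G = 0")
    case True then show ?thesis by (simp add: nn_def)
  next
    case False
    have "v (zF * evalXZ G) = v zF + v (evalXZ G)" by (rule vmult[OF zF_nz False])
    then show ?thesis using pCons False vz by (auto simp: nn_def)
  qed
  show ?case unfolding evalXZ_pCons using nn_add[OF a b] .
qed

lemma R_D: "evalXZ G \<noteq> 0 \<Longrightarrow> \<exists>j. v (evalXZ G) \<in> Dset j"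
proof -
  assume nz: "evalXZ G \<noteq> 0"
  obtain g d where gd: "evalXZ G * emb varX ^ d = emb g" using R_poly by blast
  have xnz: "emb varX ^ d \<noteq> (0 :: 'a poly poly fract)" by simp
  have gnz: "g \<noteq> 0" using gd nz xnz by (metis emb_eq0 mult_eq_0_iff)
  have "v (emb g) = v (evalXZ G) + of_nat d" using gd vmult[OF nz xnz] vpow[of "emb varX" d] vX by simp
  moreover obtain j where "v (emb g) \<in> Dset j" using key2[OF gnz] by (auto simp: Good_def)
  ultimately have "v (emb g) - of_nat d \<in> Dset j" using Dset_diff Dset_nat by blast
  then show ?thesis using \<open>v (emb g) = _\<close> by auto
qed

lemma R_unit: assumes "at_origin H \<noteq> 0" shows "v (evalXZ H) = 0"
proof -
  obtain c G where H: "H = pCons c G" by (cases H) auto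
  have c: "at_origin [:c:] \<noteq> 0" using assms H by (simp add: at_origin_def)
  have vc: "v (emb [:c:]) = 0" using v_emb_unit[OF c] .
  have cnz: "emb [:c:] \<noteq> 0" using c by (auto simp: at_origin_def)
  show ?thesis
  proof (cases "evalXZ G = 0")
    case True then show ?thesis using H vc by (simp add: evalXZ_pCons)
  next
    case False
    have "v (zF * evalXZ G) > 0" using vmult[OF zF_nz False] vz R_nonneg[of G] False by (simp add: nn_def)
    then have "v (emb [:c:] + zF * evalXZ G) = 0" using vstrict[of "emb [:c:]" "zF * evalXZ G"] vc cnz False zF_nz by simp
    then show ?thesis using H by (simp add: evalXZ_pCons)
  qed
qed

lemma Minf_props: "x \<in> Minf v \<Longrightarrow> x \<ge> 0 \<and> (\<exists>j. x \<in> Dset j)"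
proof -
  assume "x \<in> Minf v"
  then obtain y where y: "y \<in> ringB" "y \<noteq> 0" "x = v y" by (auto simp: Minf_def)
  then obtain G H where GH: "y = evalXZ G / evalXZ H" "at_origin H \<noteq> 0" by (auto simp: ringB_def)
  have Hu: "v (evalXZ H) = 0" using R_unit[OF GH(2)] .
  have Hnz: "evalXZ H \<noteq> 0" using GH y by auto
  have Gnz: "evalXZ G \<noteq> 0" using GH y by auto
  have "x = v (evalXZ G)" using y GH vdiv[OF Gnz Hnz] Hu by simp
  then show ?thesis using R_nonneg[of G] Gnz R_D[OF Gnz] by (auto simp: nn_def)
qed

lemma Mn_props: "x \<in> Mn v n \<Longrightarrow> x \<ge> 0 \<and> (\<exists>j. x \<in> Dset j)"
proof -
  assume "x \<in> Mn v n"
  then obtain y where y: "y \<in> Wn n" "y \<noteq> 0" "x = v y" by (auto simp: Mn_def)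
  then obtain G where G: "y = evalXZ G" using Wn_R by blast
  then show ?thesis using R_nonneg[of G] y R_D[of G] by (auto simp: nn_def)
qed

lemma wit_val: "emb (Pseq i :: 'a poly poly) / emb varX \<noteq> 0 \<and> v (emb (Pseq i :: 'a poly poly) / emb varX) = betabar i - 1"
proof -
  have nz: "(Pseq i :: 'a poly poly) \<noteq> 0" by (rule Pseq_nz)
  have "v (emb (Pseq i :: 'a poly poly) / emb varX) = v (emb (Pseq i)) - v (emb varX)" by (rule vdiv) (use nz in auto)
  then show ?thesis using nz vP vX by simp
qed

lemma not_fg:
  assumes F: "\<And>x. x \<in> F \<Longrightarrow> x \<ge> 0 \<and> (\<exists>j. x \<in> Dset j)"
    and W: "\<And>i. betabar i - 1 \<in> F"
  shows "\<not> fg_module (M0 v) F"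
proof
  assume "fg_module (M0 v) F"
  then obtain S where S: "finite S" "S \<subseteq> F" "F = (\<Union>m\<in>S. (\<lambda>a. a + m) ` M0 v)"
    by (auto simp: fg_module_def)
  have "\<exists>I. \<forall>m\<in>S. m \<in> Dset I" using S(1,2)
  proof (induct S rule: finite_induct)
    case empty then show ?case by simp
  next
    case (insert m S)
    then obtain I where I: "\<forall>m\<in>S. m \<in> Dset I" by blast
    obtain J where J: "m \<in> Dset J" using F insert by blast
    have "\<forall>m'\<in>insert m S. m' \<in> Dset (max I J)"
      using I J Dset_mono[of I "max I J"] Dset_mono[of J "max I J"] by auto
    then show ?case by blast
  qed
  then obtain I where I: "\<forall>m\<in>S. m \<in> Dset I" by blast
  have "betabar (Suc I) - 1 \<in> F" using W .
  then obtain m a where ma: "m \<in> S" "a \<in> M0 v" "betabar (Suc I) - 1 = a + m" using S(3) by auto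
  have ga: "Good a" using M0_Good[OF ma(2)] .
  have m0: "m \<ge> 0" using F ma(1) S(2) by blast
  have "a \<notin> Dset I"
  proof
    assume "a \<in> Dset I"
    then have "a + m + 1 \<in> Dset I" using I ma(1) Dset_add Dset_int[of 1 I] by auto
    then show False using ma(3) betabar_notD[of I] by (metis add.commute diff_add_cancel)
  qed
  then have "a \<ge> betabar (Suc I)" using ga by (auto simp: Good_def)
  then show False using ma(3) m0 by linarith
qed

lemma main: "(\<forall>n\<ge>1. \<not> fg_module (M0 v) (Mn v n)) \<and> \<not> fg_module (M0 v) (Minf v)"
proof (intro conjI allI impI)
  fix n :: nat assume n: "n \<ge> 1"
  show "\<not> fg_module (M0 v) (Mn v n)"
  proof (rule not_fg)
    show "\<And>x. x \<in> Mn v n \<Longrightarrow> 0 \<le> x \<and> (\<exists>j. x \<in> Dset j)" using Mn_props by blast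
    fix i show "betabar i - 1 \<in> Mn v n"
      unfolding Mn_def using wit_Wn[OF n, of i] wit_val[of i] by (auto intro!: image_eqI[of _ v "emb (Pseq i :: 'a poly poly) / emb varX"])
  qed
next
  show "\<not> fg_module (M0 v) (Minf v)"
  proof (rule not_fg)
    show "\<And>x. x \<in> Minf v \<Longrightarrow> 0 \<le> x \<and> (\<exists>j. x \<in> Dset j)" using Minf_props by blast
    fix i show "betabar i - 1 \<in> Minf v"
      unfolding Minf_def using wit_B[of i] wit_val[of i] by (auto intro!: image_eqI[of _ v "emb (Pseq i :: 'a poly poly) / emb varX"])
  qed
qed

end

theorem mainTheorem15:
  fixes v :: "'a::alg_closed_field poly poly fract \<Rightarrow> rat"
  assumes "is_valuation v"
    and "dominates_A v"
    and "\<And>i. v (emb (Pseq i)) = betabar i"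
  shows "(\<forall>n\<ge>1. \<not> fg_module (M0 v) (Mn v n)) \<and> \<not> fg_module (M0 v) (Minf v)"
proof -
  interpret vctx v using assms by unfold_locales
  show ?thesis by (rule main)
qed

end
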